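(* For every $t\in\mathbb Q_{\ge0}\cup\{\infty\}$, there exist a word $w$ and a letter $\alpha\in\{x,y,z\}$ such that $\omega_t=w\alpha w^{-1}$ (as words).
   Context: Modified lattice: the planar graph with vertex set $\mathbb Z^2$ whose edges are the horizontal unit segments $[(i,j),(i+1,j)]$, the vertical unit segments $[(i,j),(i,j+1)]$, and the diagonal segments of slope $-1$ joining $(i,j+1)$ and $(i+1,j)$. Words $\omega_t$: set $\omega_{0/1}=x$, $\omega_{1/0}=z$ ($\frac10$ represents $\infty$). For a reduced fraction $t=p/q\in(0,\infty)$, let $L_t$ be the segment from $(0,0)$ to $(q,p)$, oriented from $(0,0)$ to $(q,p)$. List the edges of the modified lattice whose relative interior meets $L_t$, in the order of the intersection points along $L_t$. A horizontal (resp. diagonal, vertical) edge contributes the letter $x$ (resp. $y$, $z$) if the midpoint of the edge is not on the right-hand side of the oriented segment $L_t$ (including the case that the midpoint lies on $L_t$), and contributes $x^{-1}$ (resp. $y^{-1}$, $z^{-1}$) if the midpoint is on the right-hand side. The word $\omega_t$ is the concatenation of these letters in order. *)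

theory Defs
  imports Complex_Main "HOL-Library.Product_Lexorder"
begin

text \<open>Letters x, y, z; a generator is a letter with a sign (True = positive exponent).\<close>
datatype letter = Lx | Ly | Lz

type_synonym gen = "letter \<times> bool"

definition inv_word :: "gen list \<Rightarrow> gen list" where
  "inv_word w = rev (map (\<lambda>(a, e). (a, \<not> e)) w)"

text \<open>Crossings of the segment L from (0,0) to (q,p) with the relative interiors of
  edges of the modified lattice.  An element (s, i, j, k) records that the point
  (s*q, s*p), 0 \<le> s \<le> 1, of L lies in the relative interior of the edge of kind k
  with base index (i,j):
  k = 0: horizontal edge [(i,j),(i+1,j)];
  k = 1: diagonal edge joining (i,j+1) and (i+1,j);
  k = 2: vertical edge [(i,j),(i,j+1)].\<close>
definition crossings :: "int \<Rightarrow> int \<Rightarrow> (rat \<times> int \<times> int \<times> nat) set" where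
  "crossings p q =
     {(s, i, j, k). 0 \<le> s \<and> s \<le> 1 \<and>
       ((k = 0 \<and> s * of_int p = of_int j \<and>
           of_int i < s * of_int q \<and> s * of_int q < of_int i + 1)
      \<or> (k = 1 \<and> s * of_int q + s * of_int p = of_int (i + j + 1) \<and>
           of_int i < s * of_int q \<and> s * of_int q < of_int i + 1)
      \<or> (k = 2 \<and> s * of_int q = of_int i \<and>
           of_int j < s * of_int p \<and> s * of_int p < of_int j + 1))}"

definition edge_mid :: "nat \<Rightarrow> int \<Rightarrow> int \<Rightarrow> rat \<times> rat" where
  "edge_mid k i j =
     (if k = 0 then (of_int i + 1/2, of_int j)
      else if k = 1 then (of_int i + 1/2, of_int j + 1/2)
      else (of_int i, of_int j + 1/2))"

definition edge_letter :: "nat \<Rightarrow> letter" where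
  "edge_letter k = (if k = 0 then Lx else if k = 1 then Ly else Lz)"

text \<open>The midpoint m is on the right-hand side of the segment oriented from (0,0) to (q,p)
  iff q * m_y - p * m_x < 0.  The letter is positive iff the midpoint is not on the right.\<close>
definition edge_gen :: "int \<Rightarrow> int \<Rightarrow> nat \<Rightarrow> int \<Rightarrow> int \<Rightarrow> gen" where
  "edge_gen p q k i j =
     (edge_letter k,
      of_int q * snd (edge_mid k i j) - of_int p * fst (edge_mid k i j) \<ge> 0)"

text \<open>Word for the reduced fraction p/q, read in order along L (increasing parameter s).\<close>
definition omega_frac :: "int \<Rightarrow> int \<Rightarrow> gen list" where
  "omega_frac p q =
     map (\<lambda>(s, i, j, k). edge_gen p q k i j) (sorted_list_of_set (crossings p q))"

text \<open>t \<in> Q_{\<ge>0} \<union> {\<infinity>} is represented as rat option, None = \<infinity>.\<close>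
definition omega :: "rat option \<Rightarrow> gen list" where
  "omega t = (case t of
       None \<Rightarrow> [(Lz, True)]
     | Some r \<Rightarrow> (if r = 0 then [(Lx, True)]
                  else (let (p, q) = quotient_of r in omega_frac p q)))"

end

theory Submission
  imports Defs
begin

lemma mem_cross: "(s,i,j,k) \<in> crossings p q \<longleftrightarrow> 0 \<le> s \<and> s \<le> 1 \<and>
       ((k = 0 \<and> s * of_int p = of_int j \<and>
           of_int i < s * of_int q \<and> s * of_int q < of_int i + 1)
      \<or> (k = 1 \<and> s * of_int q + s * of_int p = of_int (i + j + 1) \<and>
           of_int i < s * of_int q \<and> s * of_int q < of_int i + 1)
      \<or> (k = 2 \<and> s * of_int q = of_int i \<and>
           of_int j < s * of_int p \<and> s * of_int p < of_int j + 1))"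
  by (simp add: crossings_def)

lemma int_btw: "of_int a < (x::rat) \<Longrightarrow> x < of_int a + 1 \<Longrightarrow> x = of_int b \<Longrightarrow> False"
proof -
  assume h: "of_int a < x" "x < of_int a + 1" "x = of_int b"
  then have "a < b" "b < a + 1" by (simp_all flip: of_int_less_iff)
  then show False by simp
qed

lemma int_btw2: "of_int a < (x::rat) \<Longrightarrow> x < of_int a + 1 \<Longrightarrow> of_int b < x \<Longrightarrow> x < of_int b + 1 \<Longrightarrow> a = b"
proof -
  assume h: "of_int a < x" "x < of_int a + 1" "of_int b < x" "x < of_int b + 1"
  then have "of_int a < (of_int (b + 1) :: rat)" "of_int b < (of_int (a + 1) :: rat)" by simp_all
  then have "a < b + 1" "b < a + 1" by (simp_all only: of_int_less_iff)
  then show ?thesis by simp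
qed

lemma fst_inj:
  assumes "x \<in> crossings p q" "y \<in> crossings p q" "fst x = fst y"
  shows "x = y"
proof -
  obtain s i j k where x: "x = (s,i,j,k)" by (cases x) auto
  obtain i' j' k' where y: "y = (s,i',j',k')" using assms(3) x by (cases y) auto
  have hx: "0 \<le> s \<and> s \<le> 1 \<and>
       ((k = 0 \<and> s * of_int p = of_int j \<and>
           of_int i < s * of_int q \<and> s * of_int q < of_int i + 1)
      \<or> (k = 1 \<and> s * of_int q + s * of_int p = of_int (i + j + 1) \<and>
           of_int i < s * of_int q \<and> s * of_int q < of_int i + 1)
      \<or> (k = 2 \<and> s * of_int q = of_int i \<and>
           of_int j < s * of_int p \<and> s * of_int p < of_int j + 1))"
    using assms(1) x mem_cross by blast
  have hy: "0 \<le> s \<and> s \<le> 1 \<and>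
       ((k' = 0 \<and> s * of_int p = of_int j' \<and>
           of_int i' < s * of_int q \<and> s * of_int q < of_int i' + 1)
      \<or> (k' = 1 \<and> s * of_int q + s * of_int p = of_int (i' + j' + 1) \<and>
           of_int i' < s * of_int q \<and> s * of_int q < of_int i' + 1)
      \<or> (k' = 2 \<and> s * of_int q = of_int i' \<and>
           of_int j' < s * of_int p \<and> s * of_int p < of_int j' + 1))"
    using assms(2) y mem_cross by blast
  define X where "X = s * (of_int q :: rat)"
  define Y where "Y = s * (of_int p :: rat)"
  note hx' = hx[folded X_def Y_def] and hy' = hy[folded X_def Y_def]
  have "k = k' \<and> i = i' \<and> j = j'"
  proof (cases "k = 0")
    case k0: True
    then have a: "Y = of_int j" "of_int i < X" "X < of_int i + 1" using hx' by auto
    show ?thesis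
    proof -
      have "k' = 0"
      proof (rule ccontr)
        assume "k' \<noteq> 0"
        then have "X + Y = of_int (i' + j' + 1) \<or> X = of_int i'" using hy' by auto
        then show False
        proof
          assume "X + Y = of_int (i' + j' + 1)"
          then have "X = of_int (i' + j' + 1 - j)" using a by simp
          then show False using a int_btw by blast
        next
          assume "X = of_int i'" then show False using a int_btw by blast
        qed
      qed
      then have b: "Y = of_int j'" "of_int i' < X" "X < of_int i' + 1" using hy' by auto
      then show ?thesis using a \<open>k'=0\<close> k0 int_btw2[of i X i'] by simp
    qed
  next
    case False
    show ?thesis
    proof (cases "k = 1")
      case k1: True
      then have a: "X + Y = of_int (i + j + 1)" "of_int i < X" "X < of_int i + 1" using hx' by auto
      have "k' = 1"
      proof (rule ccontr)
        assume "k' \<noteq> 1"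
        then have "Y = of_int j' \<or> X = of_int i'" using hy' by auto
        then show False
        proof
          assume "Y = of_int j'"
          then have "X = of_int (i + j + 1 - j')" using a by simp
          then show False using a int_btw by blast
        next
          assume "X = of_int i'" then show False using a int_btw by blast
        qed
      qed
      then have b: "X + Y = of_int (i' + j' + 1)" "of_int i' < X" "X < of_int i' + 1" using hy' by auto
      have "i = i'" using a b int_btw2[of i X i'] by simp
      moreover have "j = j'" using a(1) b(1) \<open>i = i'\<close> by simp
      ultimately show ?thesis using k1 \<open>k' = 1\<close> by simp
    next
      case False
      then have a: "k = 2" "X = of_int i" "of_int j < Y" "Y < of_int j + 1" using hx' \<open>k \<noteq> 0\<close> by auto
      have "k' = 2"
      proof (rule ccontr)
        assume "k' \<noteq> 2"
        then have "of_int i' < X \<and> X < of_int i' + 1" using hy' by auto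
        then show False using a int_btw by blast
      qed
      then have b: "X = of_int i'" "of_int j' < Y" "Y < of_int j' + 1" using hy' by auto
      show ?thesis using a b \<open>k' = 2\<close> int_btw2[of j Y j'] by simp
    qed
  qed
  then show ?thesis using x y by simp
qed

definition sig :: "int \<Rightarrow> int \<Rightarrow> rat \<times> int \<times> int \<times> nat \<Rightarrow> rat \<times> int \<times> int \<times> nat" where
  "sig p q x = (case x of (s,i,j,k) \<Rightarrow>
     if k = 0 then (1-s, q-i-1, p-j, k) else if k = 1 then (1-s, q-i-1, p-j-1, k)
     else (1-s, q-i, p-j-1, k))"

lemma sig_sig: "sig p q (sig p q x) = x"
  by (cases x) (auto simp: sig_def)

lemma fst_sig: "fst (sig p q x) = 1 - fst x"
  by (cases x) (auto simp: sig_def)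

lemma sig_mem: assumes "x \<in> crossings p q" shows "sig p q x \<in> crossings p q"
proof -
  obtain s i j k where x: "x = (s,i,j,k)" by (cases x) auto
  have h: "0 \<le> s \<and> s \<le> 1 \<and>
       ((k = 0 \<and> s * of_int p = of_int j \<and>
           of_int i < s * of_int q \<and> s * of_int q < of_int i + 1)
      \<or> (k = 1 \<and> s * of_int q + s * of_int p = of_int (i + j + 1) \<and>
           of_int i < s * of_int q \<and> s * of_int q < of_int i + 1)
      \<or> (k = 2 \<and> s * of_int q = of_int i \<and>
           of_int j < s * of_int p \<and> s * of_int p < of_int j + 1))"
    using assms x mem_cross by blast
  have e1: "(1 - s) * (of_int q::rat) = of_int q - s * of_int q" "(1 - s) * (of_int p::rat) = of_int p - s * of_int p"
    by (simp_all add: algebra_simps)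
  show ?thesis using h unfolding x sig_def
    by (auto simp: e1 crossings_def)
qed

definition D :: "int \<Rightarrow> int \<Rightarrow> nat \<Rightarrow> int \<Rightarrow> int \<Rightarrow> rat" where
  "D p q k i j = of_int q * snd (edge_mid k i j) - of_int p * fst (edge_mid k i j)"

definition gg :: "int \<Rightarrow> int \<Rightarrow> rat \<times> int \<times> int \<times> nat \<Rightarrow> gen" where
  "gg p q x = (case x of (s,i,j,k) \<Rightarrow> edge_gen p q k i j)"

definition DD :: "int \<Rightarrow> int \<Rightarrow> rat \<times> int \<times> int \<times> nat \<Rightarrow> rat" where
  "DD p q x = (case x of (s,i,j,k) \<Rightarrow> D p q k i j)"

lemma DD_sig: "DD p q (sig p q x) = - DD p q x"
  by (cases x) (auto simp: sig_def DD_def D_def edge_mid_def algebra_simps)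

lemma gg_DD: "gg p q x = (case x of (s,i,j,k) \<Rightarrow> edge_letter k, DD p q x \<ge> 0)"
  by (cases x) (auto simp: gg_def DD_def D_def edge_gen_def)

lemma gg_snd: "snd (gg p q y) = (DD p q y \<ge> 0)"
  by (cases y) (simp add: gg_def DD_def D_def edge_gen_def)

lemma gg_fst: "fst (gg p q (sig p q x)) = fst (gg p q x)"
  by (cases x) (simp add: gg_def edge_gen_def sig_def)

lemma gg_sig: "DD p q x \<noteq> 0 \<Longrightarrow> gg p q (sig p q x) = (fst (gg p q x), \<not> snd (gg p q x))"
  by (rule prod_eqI) (auto simp: gg_snd gg_fst DD_sig)

lemma fin_cross: assumes "p > 0" "q > 0" shows "finite (crossings p q)"
proof -
  let ?C = "crossings p q"
  have inj: "inj_on snd ?C"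
  proof (rule inj_onI)
    fix x y assume xC: "x \<in> ?C" and yC: "y \<in> ?C" and e: "snd x = snd y"
    obtain s i j k where x: "x = (s,i,j,k)" by (cases x) auto
    obtain s' where y: "y = (s',i,j,k)" using e x by (cases y) auto
    have P: "(of_int p :: rat) \<noteq> 0" "(of_int q :: rat) \<noteq> 0" "(of_int q + of_int p :: rat) \<noteq> 0"
      using assms by simp_all
    have hx: "k = 0 \<and> s * of_int p = of_int j \<or> k = 1 \<and> s * of_int q + s * of_int p = of_int (i + j + 1)
       \<or> k = 2 \<and> s * of_int q = of_int i"
      using xC unfolding x mem_cross by auto
    have hy: "k = 0 \<and> s' * of_int p = of_int j \<or> k = 1 \<and> s' * of_int q + s' * of_int p = of_int (i + j + 1)
       \<or> k = 2 \<and> s' * of_int q = of_int i"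
      using yC unfolding y mem_cross by auto
    have "s * of_int p = s' * of_int p \<or> s * of_int q = s' * of_int q
        \<or> s * (of_int q + of_int p) = s' * (of_int q + of_int p)"
    proof -
      { assume "k = 0" then have ?thesis using hx hy by simp }
      moreover { assume "k = 1" then have "s * of_int q + s * of_int p = s' * of_int q + s' * of_int p"
          using hx hy by simp
        then have ?thesis by (simp add: algebra_simps) }
      moreover { assume "k = 2" then have ?thesis using hx hy by simp }
      ultimately show ?thesis using hx by blast
    qed
    then have "s = s'" using P by auto
    then show "x = y" using x y by simp
  qed
  have box: "snd ` ?C \<subseteq> {-(p+q)..p+q} \<times> {-(p+q)..p+q} \<times> {..2}"
  proof
    fix z assume "z \<in> snd ` ?C"
    then obtain s i j k where xC: "(s,i,j,k) \<in> ?C" and z: "z = (i,j,k)" by force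
    have h: "0 \<le> s \<and> s \<le> 1 \<and>
       ((k = 0 \<and> s * of_int p = of_int j \<and>
           of_int i < s * of_int q \<and> s * of_int q < of_int i + 1)
      \<or> (k = 1 \<and> s * of_int q + s * of_int p = of_int (i + j + 1) \<and>
           of_int i < s * of_int q \<and> s * of_int q < of_int i + 1)
      \<or> (k = 2 \<and> s * of_int q = of_int i \<and>
           of_int j < s * of_int p \<and> s * of_int p < of_int j + 1))"
      using xC mem_cross by blast
    have b1: "0 \<le> s * (of_int q::rat)" "s * (of_int q::rat) \<le> of_int q"
      "0 \<le> s * (of_int p::rat)" "s * (of_int p::rat) \<le> of_int p"
      using h assms by (simp_all add: mult_left_le_one_le)
    have pos: "(1::rat) \<le> of_int p" "(1::rat) \<le> of_int q" using assms by simp_all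
    define X where "X = s * (of_int q::rat)"
    define Y where "Y = s * (of_int p::rat)"
    have c3: "(k = 0 \<and> Y = of_int j \<and> of_int i < X \<and> X < of_int i + 1)
      \<or> (k = 1 \<and> X + Y = of_int i + of_int j + 1 \<and> of_int i < X \<and> X < of_int i + 1)
      \<or> (k = 2 \<and> X = of_int i \<and> of_int j < Y \<and> Y < of_int j + 1)"
      using h unfolding X_def Y_def by auto
    have b2: "0 \<le> X" "X \<le> of_int q" "0 \<le> Y" "Y \<le> of_int p" using b1 unfolding X_def Y_def by auto
    have "- (of_int p + of_int q) \<le> (of_int i::rat) \<and> (of_int i::rat) \<le> of_int p + of_int q \<and>
          - (of_int p + of_int q) \<le> (of_int j::rat) \<and> (of_int j::rat) \<le> of_int p + of_int q \<and> k \<le> 2"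
      using c3 b2 pos by (elim disjE conjE) linarith+
    then have "of_int (-(p+q)) \<le> (of_int i::rat) \<and> (of_int i::rat) \<le> of_int (p+q) \<and>
          of_int (-(p+q)) \<le> (of_int j::rat) \<and> (of_int j::rat) \<le> of_int (p+q) \<and> k \<le> 2"
      by simp
    then have "-(p+q) \<le> i \<and> i \<le> p+q \<and> -(p+q) \<le> j \<and> j \<le> p+q \<and> k \<le> 2"
      by (simp only: of_int_le_iff)
    then show "z \<in> {-(p+q)..p+q} \<times> {-(p+q)..p+q} \<times> {..2}" using z by auto
  qed
  have "finite (snd ` ?C)" by (rule finite_subset[OF box]) auto
  then show ?thesis using inj finite_imageD by blast
qed

lemma half:
  fixes s :: rat
  assumes b: "u*p + v*q = (1::int)" and a: "2*s*of_int q = of_int A" "2*s*of_int p = of_int B"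
    "0 \<le> s" "s \<le> 1" "odd A \<or> odd B"
  shows "s = 1/2"
proof -
  have "(of_int u * of_int p + of_int v * of_int q :: rat) = 1"
    using b by (metis of_int_1 of_int_add of_int_mult)
  then have "2*s = 2*s*(of_int u * of_int p + of_int v * of_int q)" by simp
  also have "\<dots> = of_int u * (2*s*of_int p) + of_int v*(2*s*of_int q)" by (simp add: algebra_simps)
  also have "\<dots> = of_int (u*B + v*A)" using a by simp
  finally have N: "2*s = of_int (u*B+v*A)" .
  define N where "N = u*B+v*A"
  have "of_int (N*q) = (of_int A :: rat)" using N a(1) unfolding N_def by (simp add: algebra_simps)
  then have NA: "N*q = A" by (simp only: of_int_eq_iff)
  have "of_int (N*p) = (of_int B :: rat)" using N a(2) unfolding N_def by (simp add: algebra_simps)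
  then have NB: "N*p = B" by (simp only: of_int_eq_iff)
  have "odd N" using a(5) NA NB by auto
  have "of_int 0 \<le> (of_int N :: rat)" "(of_int N :: rat) \<le> of_int 2" using N a(3,4) unfolding N_def by simp_all
  then have "0 \<le> N" "N \<le> 2" by (simp_all only: of_int_le_iff)
  then have "N = 0 \<or> N = 1 \<or> N = 2" by auto
  then have "N = 1" using \<open>odd N\<close> by auto
  then show ?thesis using N unfolding N_def by simp
qed

lemma DD_zero:
  assumes pq: "p > 0" "q > 0" "coprime p q" and xC: "x \<in> crossings p q" and z: "DD p q x = 0"
  shows "fst x = 1/2"
proof -
  obtain u v where uv: "u*p + v*q = 1" using bezout_int[of p q] pq(3) by (auto simp: coprime_iff_gcd_eq_1)
  obtain s i j k where x: "x = (s,i,j,k)" by (cases x) auto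
  have h: "0 \<le> s \<and> s \<le> 1 \<and>
       ((k = 0 \<and> s * of_int p = of_int j \<and>
           of_int i < s * of_int q \<and> s * of_int q < of_int i + 1)
      \<or> (k = 1 \<and> s * of_int q + s * of_int p = of_int (i + j + 1) \<and>
           of_int i < s * of_int q \<and> s * of_int q < of_int i + 1)
      \<or> (k = 2 \<and> s * of_int q = of_int i \<and>
           of_int j < s * of_int p \<and> s * of_int p < of_int j + 1))"
    using xC x mem_cross by blast
  define X where "X = s * (of_int q :: rat)"
  define Y where "Y = s * (of_int p :: rat)"
  define P where "P = (of_int p :: rat)"
  define Q where "Q = (of_int q :: rat)"
  have key: "Q * Y = P * X" unfolding X_def Y_def P_def Q_def by simp
  have P0: "P > 0" "Q > 0" using pq unfolding P_def Q_def by simp_all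
  note h' = h[folded X_def Y_def P_def Q_def]
  have zz: "D p q k i j = 0" using z x by (simp add: DD_def)
  have "\<exists>A B. X = of_int A / 2 \<and> Y = of_int B / 2 \<and> (odd A \<or> odd B)"
  proof (cases "k = 0")
    case True
    then have a: "Y = of_int j" and d: "Q * of_int j - P * (of_int i + 1/2) = 0"
      using h' zz by (auto simp: D_def edge_mid_def P_def Q_def)
    have "P * X = P * (of_int i + 1/2)" using key a d by simp
    then have "X = of_int i + 1/2" using P0 by simp
    then have "X = of_int (2*i+1) / 2 \<and> Y = of_int (2*j) / 2 \<and> (odd (2*i+1) \<or> odd (2*j))"
      using a by simp
    then show ?thesis by blast
  next
    case False
    show ?thesis
    proof (cases "k = 1")
      case True
      then have a: "X + Y = of_int i + of_int j + 1" and d: "Q * (of_int j + 1/2) - P * (of_int i + 1/2) = 0"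
        using h' zz by (auto simp: D_def edge_mid_def P_def Q_def)
      have "(P + Q) * X = Q * (X + Y)" using key by (simp add: algebra_simps)
      also have "\<dots> = Q * (of_int i + 1/2) + Q * (of_int j + 1/2)" using a by (simp add: algebra_simps)
      also have "\<dots> = (P + Q) * (of_int i + 1/2)" using d by (simp add: algebra_simps)
      finally have "X = of_int i + 1/2" using P0 by simp
      then have "X = of_int (2*i+1) / 2 \<and> Y = of_int (2*j+1) / 2 \<and> (odd (2*i+1) \<or> odd (2*j+1))"
        using a by simp
      then show ?thesis by blast
    next
      case False
      then have a: "X = of_int i" and d: "Q * (of_int j + 1/2) - P * of_int i = 0"
        using h' zz \<open>k \<noteq> 0\<close> by (auto simp: D_def edge_mid_def P_def Q_def)
      have "Q * Y = Q * (of_int j + 1/2)" using key a d by simp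
      then have "Y = of_int j + 1/2" using P0 by simp
      then have "X = of_int (2*i) / 2 \<and> Y = of_int (2*j+1) / 2 \<and> (odd (2*i) \<or> odd (2*j+1))"
        using a by simp
      then show ?thesis by blast
    qed
  qed
  then obtain A B where AB: "X = of_int A / 2" "Y = of_int B / 2" "odd A \<or> odd B" by blast
  have "s = 1/2"
    by (rule half[OF uv, of s A B]) (use AB h in \<open>auto simp: X_def Y_def\<close>)
  then show ?thesis using x by simp
qed

lemma rev_map_sorted:
  fixes xs :: "'a::linorder list"
  assumes "sorted_wrt (<) xs" and "\<forall>x\<in>set xs. \<sigma> x \<in> set xs" and "\<forall>x\<in>set xs. \<sigma> (\<sigma> x) = x"
    and "\<forall>x\<in>set xs. \<forall>y\<in>set xs. x < y \<longrightarrow> \<sigma> y < \<sigma> x"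
  shows "map \<sigma> xs = rev xs"
proof -
  have "sorted_wrt (\<lambda>x y. \<sigma> y < \<sigma> x) xs"
    by (rule sorted_wrt_mono_rel[OF _ assms(1)]) (use assms(4) in blast)
  then have s: "sorted_wrt (<) (rev (map \<sigma> xs))"
    by (simp add: sorted_wrt_rev sorted_wrt_map)
  have "\<sigma> ` set xs = set xs"
  proof
    show "\<sigma> ` set xs \<subseteq> set xs" using assms(2) by blast
    show "set xs \<subseteq> \<sigma> ` set xs"
    proof
      fix x assume "x \<in> set xs"
      then have "x = \<sigma> (\<sigma> x)" "\<sigma> x \<in> set xs" using assms(2,3) by auto
      then show "x \<in> \<sigma> ` set xs" by (rule image_eqI)
    qed
  qed
  then have "set (rev (map \<sigma> xs)) = set xs" by simp
  then have "rev (map \<sigma> xs) = xs" using strict_sorted_equal[OF assms(1) s] by simp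
  then show ?thesis by (metis rev_rev_ident)
qed

lemma word_split:
  assumes m: "map \<sigma> xs = rev xs" and d: "distinct xs" and c: "c \<in> set xs" "\<sigma> c = c"
    and inv: "\<forall>x\<in>set xs. \<sigma> (\<sigma> x) = x"
    and g: "\<forall>x\<in>set xs. x \<noteq> c \<longrightarrow> g (\<sigma> x) = (fst (g x), \<not> snd (g x))"
    and gc: "g c = (a, True)"
  shows "\<exists>(w :: gen list) (a :: letter). map g xs = w @ [(a, True)] @ inv_word w"
proof -
  obtain A B where xs: "xs = A @ c # B" using split_list[OF c(1)] by blast
  have cA: "c \<notin> set A" and cB: "c \<notin> set B" using d xs by auto
  have "map \<sigma> A @ c # map \<sigma> B = rev B @ c # rev A" using m xs c(2) by simp
  moreover have "c \<notin> set (map \<sigma> A)"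
  proof
    assume "c \<in> set (map \<sigma> A)"
    then obtain a where "a \<in> set A" "\<sigma> a = c" by auto
    then have "a = c" using inv xs c(2) by (metis UnI1 set_append)
    then show False using \<open>a \<in> set A\<close> cA by simp
  qed
  ultimately have "rev B @ c # rev A = map \<sigma> A @ c # map \<sigma> B" by simp
  then have "map \<sigma> A = rev B" using append_Cons_eq_iff[of c "rev B" "rev A"] cA cB by simp
  then have B: "B = rev (map \<sigma> A)" by simp
  have "map g B = inv_word (map g A)"
    unfolding B inv_word_def using g xs cA
    by (auto simp: rev_map case_prod_beta intro!: map_cong)
  then show ?thesis using xs gc by (intro exI[of _ "map g A"] exI[of _ a]) simp
qed

lemma middle:
  assumes pq: "p > 0" "q > 0" "coprime p q"
  shows "\<exists>c \<in> crossings p q. fst c = 1/2"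
proof -
  have "\<not> (even p \<and> even q)" using pq(3) by auto
  then consider "even p" "odd q" | "odd p" "even q" | "odd p" "odd q" by blast
  then show ?thesis
  proof cases
    case 1
    then obtain a b where ab: "p = 2*a" "q = 2*b+1" by (meson evenE oddE)
    have "(1/2, b, a, 0) \<in> crossings p q" unfolding mem_cross ab by simp
    then show ?thesis by force
  next
    case 2
    then obtain a b where ab: "p = 2*a+1" "q = 2*b" by (meson evenE oddE)
    have "(1/2, b, a, 2) \<in> crossings p q" unfolding mem_cross ab by simp
    then show ?thesis by force
  next
    case 3
    then obtain a b where ab: "p = 2*a+1" "q = 2*b+1" by (meson evenE oddE)
    have "(1/2, b, a, 1) \<in> crossings p q" unfolding mem_cross ab by (simp add: algebra_simps)
    then show ?thesis by force
  qed
qed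

lemma frac_main:
  assumes pq: "p > 0" "q > 0" "coprime p q"
  shows "\<exists>(w :: gen list) (a :: letter). omega_frac p q = w @ [(a, True)] @ inv_word w"
proof -
  let ?C = "crossings p q"
  define xs where "xs = sorted_list_of_set ?C"
  have fin: "finite ?C" using fin_cross pq by blast
  have set: "set xs = ?C" using fin xs_def by simp
  have dist: "distinct xs" unfolding xs_def by simp
  have sorted: "sorted_wrt (<) xs" unfolding xs_def by (rule strict_sorted_list_of_set)
  have om: "omega_frac p q = map (gg p q) xs"
    unfolding omega_frac_def xs_def by (intro map_cong) (auto simp: gg_def)
  have anti: "\<forall>x\<in>set xs. \<forall>y\<in>set xs. x < y \<longrightarrow> sig p q y < sig p q x"
  proof (intro ballI impI)
    fix x y assume xy: "x \<in> set xs" "y \<in> set xs" "x < y"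
    then have "fst x \<le> fst y" by (auto simp: less_prod_def)
    moreover have "fst x \<noteq> fst y"
    proof
      assume "fst x = fst y"
      then have "x = y" using fst_inj[of x p q y] xy(1,2) unfolding set by blast
      then show False using xy(3) by simp
    qed
    ultimately have "fst (sig p q y) < fst (sig p q x)" by (simp add: fst_sig)
    then show "sig p q y < sig p q x" by (simp add: less_prod_def)
  qed
  have m: "map (sig p q) xs = rev xs"
  proof (rule rev_map_sorted[OF sorted])
    show "\<forall>x\<in>set xs. sig p q x \<in> set xs" unfolding set using sig_mem by blast
    show "\<forall>x\<in>set xs. sig p q (sig p q x) = x" using sig_sig by blast
  qed (rule anti)
  obtain c where cC: "c \<in> ?C" and c2: "fst c = 1/2" using middle pq by blast
  have sc: "sig p q c = c"
    using fst_inj[OF sig_mem[OF cC] cC] c2 by (simp add: fst_sig)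
  have Dc: "DD p q c = 0" using DD_sig[of p q c] sc by simp
  have g: "\<forall>x\<in>set xs. x \<noteq> c \<longrightarrow> gg p q (sig p q x) = (fst (gg p q x), \<not> snd (gg p q x))"
  proof (intro ballI impI)
    fix x assume x: "x \<in> set xs" "x \<noteq> c"
    have "DD p q x \<noteq> 0"
    proof
      assume "DD p q x = 0"
      moreover have "x \<in> ?C" using x(1) unfolding set .
      ultimately have "fst x = 1/2" using DD_zero[OF pq] by blast
      then have "x = c" using fst_inj[of x p q c] \<open>x \<in> ?C\<close> cC c2 by simp
      then show False using x(2) by simp
    qed
    then show "gg p q (sig p q x) = (fst (gg p q x), \<not> snd (gg p q x))" by (rule gg_sig)
  qed
  have gc: "gg p q c = (fst (gg p q c), True)" by (rule prod_eqI) (simp_all add: gg_snd Dc)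
  show ?thesis unfolding om
  proof (rule word_split[OF m dist _ sc _ g gc])
    show "c \<in> set xs" unfolding set by (rule cC)
    show "\<forall>x\<in>set xs. sig p q (sig p q x) = x" using sig_sig by blast
  qed
qed

theorem proposition3p4:
  fixes t :: "rat option"
  assumes "case t of None \<Rightarrow> True | Some r \<Rightarrow> 0 \<le> r"
  shows "\<exists>(w :: gen list) (a :: letter). omega t = w @ [(a, True)] @ inv_word w"
proof (cases t)
  case None
  then show ?thesis by (intro exI[of _ "[]"] exI[of _ Lz]) (simp add: omega_def inv_word_def)
next
  case (Some r)
  show ?thesis
  proof (cases "r = 0")
    case True
    then show ?thesis using Some by (intro exI[of _ "[]"] exI[of _ Lx]) (simp add: omega_def inv_word_def)
  next
    case False
    then have r: "r > 0" using assms Some by auto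
    obtain p q where pq: "quotient_of r = (p, q)" by (cases "quotient_of r") auto
    have q: "q > 0" using quotient_of_denom_pos[OF pq] .
    have cp: "coprime p q" using quotient_of_coprime[OF pq] .
    have "r = of_int p / of_int q" using quotient_of_div[OF pq] .
    then have p: "p > 0" using r q by (simp add: zero_less_divide_iff)
    have "omega t = omega_frac p q" using Some False pq by (simp add: omega_def)
    then show ?thesis using frac_main[OF p q cp] by simp
  qed
qed

end
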